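(* Let $\mathscr{X}$ be a commutative association scheme with splitting field $\mathbb{F}$, and let $\mathbb{K}_1$ and $\mathbb{K}_2$ be subfields of $\mathbb{F}$. If $\mathscr{X}$ satisfies Property $\mathsf{M}_{\mathbb{K}_1}$ and Property $\mathsf{M}_{\mathbb{K}_2}$, then $\mathscr{X}$ satisfies Property $\mathsf{M}_{\mathbb{K}_1\cap\mathbb{K}_2}$.
   Context: A (commutative) association scheme is a pair $(X,\mathcal{R})$ with $X$ a nonempty finite set and $\mathcal{R}=\{R_0,\ldots,R_d\}$ a partition of $X\times X$ such that $R_0$ is the identity relation, each transpose $R_i^\top$ is some $R_{i'}$, and there are numbers $p_{ij}^k=p_{ji}^k$ such that for every $(a,b)\in R_k$ the number of $c$ with $(a,c)\in R_i$, $(c,b)\in R_j$ is $p_{ij}^k$. Its adjacency matrices $A_0,\ldots,A_d$ are the $0/1$ matrices of the $R_i$; their complex span has a unique basis of primitive idempotents $E_0,\ldots,E_d$ ($E_iE_j=\delta_{ij}E_i$, $\sum_jE_j=I$). The splitting field is $\mathbb{Q}$ with all eigenvalues of $A_1,\ldots,A_d$ adjoined. For a field $\mathbb{K}\subseteq\mathbb{C}$, $\mathcal{E}_\mathbb{K}=\{\sum_{j=0}^d c_jE_j: c_j\in\{0,1\},\ \text{all entries in }\mathbb{K}\}$, and $\mathbb{K}[\mathcal{E}_\mathbb{K}]$ is its $\mathbb{K}$-span. The scheme has Property $\mathsf{M}_\mathbb{K}$ if $\mathbb{K}[\mathcal{E}_\mathbb{K}]$ is closed under Schur (entrywise) multiplication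 (equivalently, the complex span of $\mathcal{E}_\mathbb{K}$ is the Bose-Mesner algebra of a fusion scheme of $\mathscr{X}$). *)

theory Defs
  imports Complex_Main
begin

text \<open>Matrices indexed by the (finite, nonempty) point set X, modelled as the finite type 'x.\<close>
type_synonym 'x cmat = "'x \<Rightarrow> 'x \<Rightarrow> complex"

definition mmult :: "'x::finite cmat \<Rightarrow> 'x cmat \<Rightarrow> 'x cmat" where
  "mmult M N = (\<lambda>a b. \<Sum>c\<in>UNIV. M a c * N c b)"

definition idmat :: "'x cmat" where
  "idmat = (\<lambda>a b. if a = b then 1 else 0)"

definition schur :: "'x cmat \<Rightarrow> 'x cmat \<Rightarrow> 'x cmat" where
  "schur M N = (\<lambda>a b. M a b * N a b)"

definition smat :: "complex \<Rightarrow> 'x cmat \<Rightarrow> 'x cmat" where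
  "smat c M = (\<lambda>a b. c * M a b)"

text \<open>Relation R_i is {(a,b). rel a b = i}, for i = 0..d.\<close>
definition assoc_scheme :: "nat \<Rightarrow> ('x::finite \<Rightarrow> 'x \<Rightarrow> nat) \<Rightarrow> bool" where
  "assoc_scheme d rel \<longleftrightarrow>
     (\<forall>a b. rel a b \<le> d) \<and>
     (\<forall>i\<le>d. \<exists>a b. rel a b = i) \<and>
     (\<forall>a b. rel a b = 0 \<longleftrightarrow> a = b) \<and>
     (\<forall>i\<le>d. \<exists>i'\<le>d. \<forall>a b. rel b a = i \<longleftrightarrow> rel a b = i') \<and>
     (\<forall>i\<le>d. \<forall>j\<le>d. \<forall>k\<le>d. \<exists>p::nat. \<forall>a b. rel a b = k \<longrightarrow>
         card {c. rel a c = i \<and> rel c b = j} = p \<and>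
         card {c. rel a c = j \<and> rel c b = i} = p)"

definition adj :: "('x \<Rightarrow> 'x \<Rightarrow> nat) \<Rightarrow> nat \<Rightarrow> 'x cmat" where
  "adj rel i = (\<lambda>a b. if rel a b = i then 1 else 0)"

definition cspan_fam :: "nat \<Rightarrow> (nat \<Rightarrow> 'x cmat) \<Rightarrow> 'x cmat set" where
  "cspan_fam d F = {(\<lambda>a b. \<Sum>j\<le>d. c j * F j a b) | c. True}"

definition bose_mesner :: "nat \<Rightarrow> ('x \<Rightarrow> 'x \<Rightarrow> nat) \<Rightarrow> 'x cmat set" where
  "bose_mesner d rel = cspan_fam d (adj rel)"

definition prim_idempotents :: "nat \<Rightarrow> ('x::finite \<Rightarrow> 'x \<Rightarrow> nat) \<Rightarrow> (nat \<Rightarrow> 'x cmat) \<Rightarrow> bool" where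
  "prim_idempotents d rel E \<longleftrightarrow>
     cspan_fam d E = bose_mesner d rel \<and>
     (\<forall>c. (\<lambda>a b. \<Sum>j\<le>d. c j * E j a b) = (\<lambda>a b. 0) \<longrightarrow> (\<forall>j\<le>d. c j = 0)) \<and>
     (\<forall>i\<le>d. \<forall>j\<le>d. mmult (E i) (E j) = (if i = j then E i else (\<lambda>a b. 0))) \<and>
     (\<lambda>a b. \<Sum>j\<le>d. E j a b) = idmat"

definition subfield :: "complex set \<Rightarrow> bool" where
  "subfield K \<longleftrightarrow> 0 \<in> K \<and> 1 \<in> K \<and>
     (\<forall>x\<in>K. \<forall>y\<in>K. x + y \<in> K \<and> x - y \<in> K \<and> x * y \<in> K) \<and>
     (\<forall>x\<in>K. x \<noteq> 0 \<longrightarrow> inverse x \<in> K)"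

definition eigenvalue :: "'x::finite cmat \<Rightarrow> complex \<Rightarrow> bool" where
  "eigenvalue M lam \<longleftrightarrow> (\<exists>v::'x \<Rightarrow> complex. v \<noteq> (\<lambda>_. 0) \<and>
       (\<forall>a. (\<Sum>b\<in>UNIV. M a b * v b) = lam * v a))"

text \<open>Splitting field: Q with all eigenvalues of A_1,...,A_d adjoined (the smallest subfield
  of C containing them; every subfield of C contains Q).\<close>
definition splitting_field :: "nat \<Rightarrow> ('x::finite \<Rightarrow> 'x \<Rightarrow> nat) \<Rightarrow> complex set" where
  "splitting_field d rel = \<Inter> {K. subfield K \<and>
       (\<forall>i\<in>{1..d}. \<forall>lam. eigenvalue (adj rel i) lam \<longrightarrow> lam \<in> K)}"

definition E_K :: "nat \<Rightarrow> (nat \<Rightarrow> 'x cmat) \<Rightarrow> complex set \<Rightarrow> 'x cmat set" where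
  "E_K d E K = {M. \<exists>S. S \<subseteq> {..d} \<and> M = (\<lambda>a b. \<Sum>j\<in>S. E j a b) \<and> (\<forall>a b. M a b \<in> K)}"

definition K_span_E :: "nat \<Rightarrow> (nat \<Rightarrow> 'x cmat) \<Rightarrow> complex set \<Rightarrow> 'x cmat set" where
  "K_span_E d E K = {M. \<exists>T k. finite T \<and> T \<subseteq> E_K d E K \<and> (\<forall>N\<in>T. k N \<in> K) \<and>
       M = (\<lambda>a b. \<Sum>N\<in>T. k N * N a b)}"

text \<open>Property M_K (stated for the family of primitive idempotents, which is unique up to
  indexing; quantifying over all such families makes it a property of the scheme).\<close>
definition property_M :: "nat \<Rightarrow> ('x::finite \<Rightarrow> 'x \<Rightarrow> nat) \<Rightarrow> complex set \<Rightarrow> bool" where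
  "property_M d rel K \<longleftrightarrow> (\<forall>E. prim_idempotents d rel E \<longrightarrow>
     (\<forall>M\<in>K_span_E d E K. \<forall>N\<in>K_span_E d E K. schur M N \<in> K_span_E d E K))"

end

theory Submission
  imports Defs
begin

definition Dm :: "nat \<Rightarrow> (nat \<Rightarrow> 'x cmat) \<Rightarrow> (nat \<Rightarrow> complex) \<Rightarrow> 'x cmat" where
  "Dm d E f = (\<lambda>a b. \<Sum>j\<le>d. f j * E j a b)"

lemma subfield_sum:
  assumes "subfield K" "\<forall>x\<in>A. f x \<in> K" shows "sum f A \<in> K"
  using assms(2)
proof (induct A rule: infinite_finite_induct)
  case (infinite A) then show ?case using assms(1) by (simp add: subfield_def)
next
  case empty then show ?case using assms(1) by (simp add: subfield_def)
next
  case (insert x F) then show ?case using assms(1) by (simp add: subfield_def)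
qed

lemma subfield_div:
  assumes "subfield K" "x \<in> K" "y \<in> K" shows "x / y \<in> K"
proof (cases "y = 0")
  case True then show ?thesis using assms by (simp add: subfield_def)
next
  case False then show ?thesis using assms by (simp add: subfield_def divide_inverse)
qed

lemma subfield_Int: "subfield K1 \<Longrightarrow> subfield K2 \<Longrightarrow> subfield (K1 \<inter> K2)"
  by (simp add: subfield_def)

lemma mmult_K:
  assumes "subfield K" "\<forall>a b. M a b \<in> K" "\<forall>a b. N a b \<in> K"
  shows "\<forall>a b. mmult M N a b \<in> K"
  unfolding mmult_def using assms
  by (intro allI subfield_sum) (auto simp: subfield_def)

lemma KS_entries:
  assumes "subfield K" "M \<in> K_span_E d E K" shows "M a b \<in> K"
proof -
  obtain T k where "finite T" "T \<subseteq> E_K d E K" "\<forall>N\<in>T. k N \<in> K"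
    "M = (\<lambda>a b. \<Sum>N\<in>T. k N * N a b)"
    using assms(2) unfolding K_span_E_def by blast
  moreover have "\<forall>N\<in>T. N a b \<in> K" using \<open>T \<subseteq> E_K d E K\<close> unfolding E_K_def by blast
  ultimately show ?thesis using assms(1)
    by (auto intro!: subfield_sum simp: subfield_def)
qed

lemma KS_mono:
  assumes "K \<subseteq> K'" shows "K_span_E d E K \<subseteq> K_span_E d E K'"
proof -
  have "E_K d E K \<subseteq> E_K d E K'" using assms unfolding E_K_def by blast
  show ?thesis
  proof
    fix M assume "M \<in> K_span_E d E K"
    then obtain T k where T: "finite T" "T \<subseteq> E_K d E K" "\<forall>N\<in>T. k N \<in> K"
      "M = (\<lambda>a b. \<Sum>N\<in>T. k N * N a b)" unfolding K_span_E_def by blast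
    have "T \<subseteq> E_K d E K'" "\<forall>N\<in>T. k N \<in> K'" using T(2,3) \<open>E_K d E K \<subseteq> E_K d E K'\<close> assms by auto
    then show "M \<in> K_span_E d E K'" unfolding K_span_E_def using T(1,4) by blast
  qed
qed

lemma KS_zero: "(\<lambda>a b. 0) \<in> K_span_E d E K"
  unfolding K_span_E_def by (rule CollectI, rule exI[of _ "{}"]) auto

lemma KS_single:
  assumes "N \<in> E_K d E K" "c \<in> K" shows "(\<lambda>a b. c * N a b) \<in> K_span_E d E K"
  unfolding K_span_E_def
  by (rule CollectI, rule exI[of _ "{N}"], rule exI[of _ "\<lambda>_. c"]) (use assms in auto)

lemma KS_add:
  assumes "subfield K" "M \<in> K_span_E d E K" "M' \<in> K_span_E d E K"
  shows "(\<lambda>a b. M a b + M' a b) \<in> K_span_E d E K"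
proof -
  obtain T k where T: "finite T" "T \<subseteq> E_K d E K" "\<forall>N\<in>T. k N \<in> K"
    "M = (\<lambda>a b. \<Sum>N\<in>T. k N * N a b)"
    using assms(2) unfolding K_span_E_def by blast
  obtain T' k' where T': "finite T'" "T' \<subseteq> E_K d E K" "\<forall>N\<in>T'. k' N \<in> K"
    "M' = (\<lambda>a b. \<Sum>N\<in>T'. k' N * N a b)"
    using assms(3) unfolding K_span_E_def by blast
  define kk where "kk N = (if N \<in> T then k N else 0) + (if N \<in> T' then k' N else 0)" for N
  have fin: "finite (T \<union> T')" using T T' by simp
  have "(\<lambda>a b. M a b + M' a b) = (\<lambda>a b. \<Sum>N\<in>T \<union> T'. kk N * N a b)"
  proof (intro ext)
    fix a b
    have e1: "(\<Sum>N\<in>T \<union> T'. (if N \<in> T then k N * N a b else 0)) = (\<Sum>N\<in>T. k N * N a b)"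
      using sum.inter_restrict[OF fin, of "\<lambda>N. k N * N a b" T] by (simp add: Int_absorb1)
    have e2: "(\<Sum>N\<in>T \<union> T'. (if N \<in> T' then k' N * N a b else 0)) = (\<Sum>N\<in>T'. k' N * N a b)"
      using sum.inter_restrict[OF fin, of "\<lambda>N. k' N * N a b" T'] by (simp add: Int_absorb1)
    have "(\<Sum>N\<in>T \<union> T'. kk N * N a b) = (\<Sum>N\<in>T \<union> T'. (if N \<in> T then k N * N a b else 0)
           + (if N \<in> T' then k' N * N a b else 0))"
      by (rule sum.cong) (auto simp: kk_def algebra_simps)
    also have "\<dots> = M a b + M' a b" using e1 e2 T(4) T'(4) by (simp add: sum.distrib)
    finally show "M a b + M' a b = (\<Sum>N\<in>T \<union> T'. kk N * N a b)" by simp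
  qed
  moreover have "\<forall>N\<in>T \<union> T'. kk N \<in> K" using T T' assms(1) by (auto simp: kk_def subfield_def)
  moreover have "T \<union> T' \<subseteq> E_K d E K" using T(2) T'(2) by simp
  ultimately show ?thesis unfolding K_span_E_def
    by (intro CollectI exI[of _ "T \<union> T'"] exI[of _ kk] conjI fin) auto
qed

lemma KS_sum:
  assumes "subfield K" "finite V" "\<forall>c\<in>V. f c \<in> K_span_E d E K"
  shows "(\<lambda>a b. \<Sum>c\<in>V. f c a b) \<in> K_span_E d E K"
  using assms(2,3)
proof (induct V rule: finite_induct)
  case empty then show ?case using KS_zero by simp
next
  case (insert x F)
  then show ?case using KS_add[OF assms(1), of "f x" d E "\<lambda>a b. \<Sum>c\<in>F. f c a b"] by simp
qed

lemma span_coeffs: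
  assumes "Z \<in> K_span_E d E K" "subfield K"
  shows "\<exists>z. (\<forall>j\<le>d. z j \<in> K) \<and> Z = Dm d E z"
proof -
  obtain T k where T: "finite T" "T \<subseteq> E_K d E K" "\<forall>N\<in>T. k N \<in> K"
    "Z = (\<lambda>a b. \<Sum>N\<in>T. k N * N a b)"
    using assms(1) unfolding K_span_E_def by blast
  have "\<forall>N\<in>T. \<exists>S. S \<subseteq> {..d} \<and> N = (\<lambda>a b. \<Sum>j\<in>S. E j a b)"
    using T(2) unfolding E_K_def by blast
  then obtain S where S: "\<forall>N\<in>T. S N \<subseteq> {..d} \<and> N = (\<lambda>a b. \<Sum>j\<in>S N. E j a b)"
    by metis
  define z where "z j = (\<Sum>N\<in>T. if j \<in> S N then k N else 0)" for j
  have "z j \<in> K" for j unfolding z_def using T(3) assms(2)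
    by (intro subfield_sum) (auto simp: subfield_def)
  moreover have "Z = Dm d E z"
  proof (intro ext)
    fix a b
    have "Z a b = (\<Sum>N\<in>T. k N * (\<Sum>j\<in>S N. E j a b))"
    proof -
      have "N a b = (\<Sum>j\<in>S N. E j a b)" if "N \<in> T" for N
      proof -
        have "N = (\<lambda>a b. \<Sum>j\<in>S N. E j a b)" using S that by blast
        then show ?thesis by metis
      qed
      then show ?thesis unfolding T(4) by (intro sum.cong) simp_all
    qed
    also have "\<dots> = (\<Sum>N\<in>T. \<Sum>j\<le>d. (if j \<in> S N then k N else 0) * E j a b)"
    proof (rule sum.cong)
      fix N assume "N \<in> T"
      then have "S N = {..d} \<inter> S N" using S by blast
      then have "(\<Sum>j\<in>S N. k N * E j a b) = (\<Sum>j\<le>d. if j \<in> S N then k N * E j a b else 0)"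
        using sum.inter_restrict[of "{..d}" "\<lambda>j. k N * E j a b" "S N"] by simp
      then show "k N * (\<Sum>j\<in>S N. E j a b) = (\<Sum>j\<le>d. (if j \<in> S N then k N else 0) * E j a b)"
        by (auto simp: sum_distrib_left intro!: sum.cong)
    qed simp
    also have "\<dots> = (\<Sum>j\<le>d. \<Sum>N\<in>T. (if j \<in> S N then k N else 0) * E j a b)"
      by (rule sum.swap)
    also have "\<dots> = Dm d E z a b"
      unfolding Dm_def z_def by (simp add: sum_distrib_right)
    finally show "Z a b = Dm d E z a b" .
  qed
  ultimately show ?thesis by (intro exI[of _ z]) simp
qed

lemma Dm_unique:
  assumes "prim_idempotents d rel E" "Dm d E z = Dm d E z'" "j \<le> d"
  shows "z j = z' j"
proof -
  have "(\<lambda>a b. \<Sum>j\<le>d. (z j - z' j) * E j a b) = (\<lambda>a b. 0)"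
  proof (intro ext)
    fix a b
    have "Dm d E z a b = Dm d E z' a b" using assms(2) by simp
    then show "(\<Sum>j\<le>d. (z j - z' j) * E j a b) = 0"
      unfolding Dm_def by (simp add: left_diff_distrib sum_subtractf)
  qed
  then show ?thesis using assms(1,3) unfolding prim_idempotents_def by auto
qed

lemma Dm_cong: "(\<And>j. j \<le> d \<Longrightarrow> f j = g j) \<Longrightarrow> Dm d E f = Dm d E g"
  unfolding Dm_def by (intro ext sum.cong) auto

lemma Dm_mult:
  assumes "prim_idempotents d rel E"
  shows "mmult (Dm d E f) (Dm d E g) = Dm d E (\<lambda>j. f j * g j)"
proof (intro ext)
  fix a b
  have orth: "\<And>i j. i \<le> d \<Longrightarrow> j \<le> d \<Longrightarrow> (\<Sum>c\<in>UNIV. E i a c * E j c b) = (if i = j then E i a b else 0)"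
  proof -
    fix i j assume "i \<le> d" "j \<le> d"
    then have "mmult (E i) (E j) = (if i = j then E i else (\<lambda>a b. 0))"
      using assms unfolding prim_idempotents_def by blast
    then have "mmult (E i) (E j) a b = (if i = j then E i a b else 0)" by simp
    then show "(\<Sum>c\<in>UNIV. E i a c * E j c b) = (if i = j then E i a b else 0)"
      unfolding mmult_def by simp
  qed
  have "mmult (Dm d E f) (Dm d E g) a b =
     (\<Sum>c\<in>UNIV. \<Sum>i\<le>d. \<Sum>j\<le>d. f i * g j * (E i a c * E j c b))"
    unfolding mmult_def Dm_def sum_product by (intro sum.cong refl) (simp add: algebra_simps)
  also have "\<dots> = (\<Sum>i\<le>d. \<Sum>c\<in>UNIV. \<Sum>j\<le>d. f i * g j * (E i a c * E j c b))"
    by (rule sum.swap)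
  also have "\<dots> = (\<Sum>i\<le>d. \<Sum>j\<le>d. \<Sum>c\<in>UNIV. f i * g j * (E i a c * E j c b))"
    by (intro sum.cong refl) (rule sum.swap)
  also have "\<dots> = (\<Sum>i\<le>d. \<Sum>j\<le>d. f i * g j * (\<Sum>c\<in>UNIV. E i a c * E j c b))"
    by (simp add: sum_distrib_left)
  also have "\<dots> = (\<Sum>i\<le>d. \<Sum>j\<le>d. f i * g j * (if i = j then E i a b else 0))"
    using orth by (intro sum.cong) auto
  also have "\<dots> = (\<Sum>i\<le>d. \<Sum>j\<le>d. if i = j then f i * g i * E i a b else 0)"
    by (intro sum.cong) auto
  also have "\<dots> = Dm d E (\<lambda>j. f j * g j) a b"
    unfolding Dm_def by simp
  finally show "mmult (Dm d E f) (Dm d E g) a b = Dm d E (\<lambda>j. f j * g j) a b" .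
qed

fun lag :: "'x::finite cmat \<Rightarrow> complex \<Rightarrow> complex list \<Rightarrow> 'x cmat" where
  "lag Z c [] = idmat"
| "lag Z c (c' # cs) = mmult (\<lambda>a b. (Z a b - c' * idmat a b) / (c - c')) (lag Z c cs)"

lemma lag_K:
  assumes "subfield K" "\<forall>a b. Z a b \<in> K" "c \<in> K" "set cs \<subseteq> K"
  shows "\<forall>a b. lag Z c cs a b \<in> K"
  using assms(4)
proof (induct cs)
  case Nil then show ?case using assms(1) by (simp add: idmat_def subfield_def)
next
  case (Cons c' cs)
  have "\<forall>a b. (Z a b - c' * idmat a b) / (c - c') \<in> K"
    using Cons.prems assms by (auto intro!: subfield_div simp: idmat_def subfield_def)
  then show ?case using Cons mmult_K[OF assms(1)] by simp
qed

lemma lag_Dm: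
  assumes "prim_idempotents d rel E" "Z = Dm d E z"
  shows "lag Z c cs = Dm d E (\<lambda>j. prod_list (map (\<lambda>c'. (z j - c') / (c - c')) cs))"
proof (induct cs)
  case Nil
  have "idmat = (\<lambda>a b. \<Sum>j\<le>d. E j a b)" using assms(1) unfolding prim_idempotents_def by simp
  then show ?case by (simp add: Dm_def)
next
  case (Cons c' cs)
  have idm: "idmat = (\<lambda>a b. \<Sum>j\<le>d. E j a b)" using assms(1) unfolding prim_idempotents_def by simp
  have "(\<lambda>a b. (Z a b - c' * idmat a b) / (c - c')) = Dm d E (\<lambda>j. (z j - c') / (c - c'))"
  proof (intro ext)
    fix a b
    have "(\<Sum>j\<le>d. (z j - c') / (c - c') * E j a b) = (\<Sum>j\<le>d. (z j * E j a b - c' * E j a b) / (c - c'))"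
      by (intro sum.cong refl) (simp add: field_simps)
    also have "\<dots> = ((\<Sum>j\<le>d. z j * E j a b) - c' * (\<Sum>j\<le>d. E j a b)) / (c - c')"
      by (simp add: sum_divide_distrib[symmetric] sum_subtractf sum_distrib_left)
    finally show "(Z a b - c' * idmat a b) / (c - c') = Dm d E (\<lambda>j. (z j - c') / (c - c')) a b"
      unfolding assms(2) Dm_def idm by simp
  qed
  then show ?case using Cons Dm_mult[OF assms(1)] by simp
qed

lemma prod_list_ones: "(\<forall>x\<in>set xs. f x = (1::complex)) \<Longrightarrow> prod_list (map f xs) = 1"
  by (induct xs) auto

theorem proposition3p10:
  fixes d :: nat and rel :: "'x::finite \<Rightarrow> 'x \<Rightarrow> nat" and K1 K2 :: "complex set"
  assumes "assoc_scheme d rel"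
    and "subfield K1" and "K1 \<subseteq> splitting_field d rel"
    and "subfield K2" and "K2 \<subseteq> splitting_field d rel"
    and "property_M d rel K1" and "property_M d rel K2"
  shows "property_M d rel (K1 \<inter> K2)"
  unfolding property_M_def
proof (intro allI impI ballI)
  fix E M N
  assume P: "prim_idempotents d rel E"
    and M: "M \<in> K_span_E d E (K1 \<inter> K2)" and N: "N \<in> K_span_E d E (K1 \<inter> K2)"
  let ?K = "K1 \<inter> K2"
  define Z where "Z = schur M N"
  have sK: "subfield ?K" using assms subfield_Int by blast
  have "M \<in> K_span_E d E K1" "N \<in> K_span_E d E K1"
    using M N KS_mono[of ?K K1] by auto
  then have Z1: "Z \<in> K_span_E d E K1" using assms(6) P unfolding property_M_def Z_def by blast
  have "M \<in> K_span_E d E K2" "N \<in> K_span_E d E K2"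
    using M N KS_mono[of ?K K2] by auto
  then have Z2: "Z \<in> K_span_E d E K2" using assms(7) P unfolding property_M_def Z_def by blast
  obtain z where z: "\<forall>j\<le>d. z j \<in> K1" "Z = Dm d E z" using span_coeffs[OF Z1 assms(2)] by blast
  obtain z' where z': "\<forall>j\<le>d. z' j \<in> K2" "Z = Dm d E z'" using span_coeffs[OF Z2 assms(4)] by blast
  have zK: "\<forall>j\<le>d. z j \<in> ?K"
  proof (intro allI impI)
    fix j assume j: "j \<le> d"
    have "z j = z' j" using Dm_unique[OF P _ j, of z z'] z(2) z'(2) by simp
    then show "z j \<in> ?K" using z(1) z'(1) j by auto
  qed
  have mulK: "\<And>x y. x \<in> ?K \<Longrightarrow> y \<in> ?K \<Longrightarrow> x * y \<in> ?K"
    using sK unfolding subfield_def by blast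
  have ZK: "\<forall>a b. Z a b \<in> ?K"
  proof (intro allI)
    fix a b
    show "Z a b \<in> ?K" unfolding Z_def schur_def
      using mulK[OF KS_entries[OF sK M, of a b] KS_entries[OF sK N, of a b]] by simp
  qed
  define V where "V = z ` {..d}"
  define SS where "SS c = (\<lambda>a b. \<Sum>j\<in>{x. x \<in> {..d} \<and> z x = c}. E j a b)" for c
  have VK: "V \<subseteq> ?K" using zK V_def by auto
  have fV: "finite V" unfolding V_def by simp
  have SSin: "SS c \<in> E_K d E ?K" if "c \<in> V" for c
  proof -
    obtain cs where cs: "set cs = V - {c}" using finite_list[of "V - {c}"] fV by blast
    have "lag Z c cs = Dm d E (\<lambda>j. prod_list (map (\<lambda>c'. (z j - c') / (c - c')) cs))"
      using lag_Dm[OF P z(2)] .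
    also have "\<dots> = Dm d E (\<lambda>j. if z j = c then 1 else 0)"
    proof (rule Dm_cong)
      fix j assume "j \<le> d"
      show "prod_list (map (\<lambda>c'. (z j - c') / (c - c')) cs) = (if z j = c then 1 else 0)"
      proof (cases "z j = c")
        case True
        have "\<forall>x\<in>set cs. (z j - x) / (c - x) = 1"
        proof
          fix x assume "x \<in> set cs"
          then have "x \<noteq> c" using cs by blast
          then have "c - x \<noteq> 0" by simp
          then show "(z j - x) / (c - x) = 1" using True by simp
        qed
        then show ?thesis using True by (simp add: prod_list_ones)
      next
        case False
        have "z j \<in> V" unfolding V_def using \<open>j \<le> d\<close> by simp
        then have "z j \<in> set cs" using cs False by blast
        then have "0 \<in> (\<lambda>c'. (z j - c') / (c - c')) ` set cs" by (rule rev_image_eqI) simp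
        then have "0 \<in> set (map (\<lambda>c'. (z j - c') / (c - c')) cs)" by simp
        then show ?thesis using False by (simp add: prod_list_zero_iff)
      qed
    qed
    also have "\<dots> = SS c"
    proof (intro ext)
      fix a b
      have "Dm d E (\<lambda>j. if z j = c then 1 else 0) a b = (\<Sum>j\<le>d. if z j = c then E j a b else 0)"
        unfolding Dm_def by (intro sum.cong) auto
      also have "\<dots> = SS c a b"
        unfolding SS_def using sum.inter_filter[of "{..d}" "\<lambda>j. E j a b" "\<lambda>j. z j = c"] by simp
      finally show "Dm d E (\<lambda>j. if z j = c then 1 else 0) a b = SS c a b" .
    qed
    finally have eq: "lag Z c cs = SS c" .
    have "c \<in> ?K" using that VK by auto
    moreover have "set cs \<subseteq> ?K" using cs VK by auto
    ultimately have "\<forall>a b. lag Z c cs a b \<in> ?K" using lag_K[OF sK ZK] by blast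
    then have SSK: "\<forall>a b. SS c a b \<in> ?K" using eq by simp
    show ?thesis unfolding E_K_def
    proof (intro CollectI exI[of _ "{x. x \<in> {..d} \<and> z x = c}"] conjI)
      show "{x. x \<in> {..d} \<and> z x = c} \<subseteq> {..d}" by blast
      show "SS c = (\<lambda>a b. \<Sum>j\<in>{x. x \<in> {..d} \<and> z x = c}. E j a b)" by (rule SS_def)
      show "\<forall>a b. SS c a b \<in> ?K" by (rule SSK)
    qed
  qed
  have "(\<lambda>a b. \<Sum>c\<in>V. c * SS c a b) \<in> K_span_E d E ?K"
  proof (rule KS_sum[OF sK fV, of "\<lambda>c a b. c * SS c a b", simplified], intro ballI)
    fix c assume "c \<in> V"
    then show "(\<lambda>a b. c * SS c a b) \<in> K_span_E d E ?K" using KS_single[OF SSin] VK by blast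
  qed
  moreover have "Z = (\<lambda>a b. \<Sum>c\<in>V. c * SS c a b)"
  proof (intro ext)
    fix a b
    have "Z a b = (\<Sum>c\<in>V. \<Sum>j\<in>{x. x \<in> {..d} \<and> z x = c}. z j * E j a b)"
      unfolding z(2) Dm_def V_def using sum.image_gen[OF finite_atMost[of d], of "\<lambda>j. z j * E j a b" z] by simp
    also have "\<dots> = (\<Sum>c\<in>V. c * SS c a b)"
    proof (rule sum.cong[OF refl])
      fix c assume "c \<in> V"
      have "(\<Sum>j\<in>{x. x \<in> {..d} \<and> z x = c}. z j * E j a b) = (\<Sum>j\<in>{x. x \<in> {..d} \<and> z x = c}. c * E j a b)"
        by (rule sum.cong[OF refl]) simp
      then show "(\<Sum>j\<in>{x. x \<in> {..d} \<and> z x = c}. z j * E j a b) = c * SS c a b"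
        unfolding SS_def by (simp add: sum_distrib_left)
    qed
    finally show "Z a b = (\<Sum>c\<in>V. c * SS c a b)" .
  qed
  ultimately show "schur M N \<in> K_span_E d E ?K" unfolding Z_def by simp
qed

end
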